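(* For every $\varepsilon\in(0,1/64)$ there exists a family of MHR distributions supported on $[1,2]$ such that, with either the one-sample hint or the value-range hint, any pricing-query algorithm that for every distribution in the family outputs a price $\widehat p$ with $\mathrm{Rev}(\widehat p)\ge(1-\varepsilon)\max_p\mathrm{Rev}(p)$ with probability at least $2/15$ must perform $\Omega(\varepsilon^{-2})$ pricing queries.
   Context: Pricing query model: the buyer's value has unknown CDF $F(p)=\Pr[v<p]$; the algorithm adaptively posts prices $p_1,\dots,p_m$; at each query a fresh independent $v_t\sim F$ is drawn and only $\mathbf 1\{v_t\ge p_t\}$ is observed; finally it outputs a price. $q(p)=1-F(p)$, $\mathrm{Rev}(p)=p\,q(p)$. One-sample hint: before any queries the algorithm observes one realized value $v_0\sim F$ (and nothing else about $F$). Value-range hint: the algorithm knows the support of $F$ lies in $[1,H]$ (here $H=2$). A distribution with density $f$ is MHR if $f(v)/(1-F(v))$ is nondecreasing on its support. *)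

theory Defs
  imports "HOL-Probability.Probability"
begin

definition cdfF :: "real measure \<Rightarrow> real \<Rightarrow> real" where
  "cdfF M p = measure M {..<p}"

definition sellq :: "real measure \<Rightarrow> real \<Rightarrow> real" where
  "sellq M p = measure M {p..}"

definition Rev :: "real measure \<Rightarrow> real \<Rightarrow> real" where
  "Rev M p = p * sellq M p"

definition opt_rev :: "real measure \<Rightarrow> real" where
  "opt_rev M = (SUP p. Rev M p)"

definition MHR :: "real measure \<Rightarrow> bool" where
  "MHR M \<longleftrightarrow> (\<exists>f. f \<in> borel_measurable borel \<and> (\<forall>x. 0 \<le> f x) \<and>
      M = density lborel (\<lambda>x. ennreal (f x)) \<and>
      (\<forall>x y. x \<le> y \<and> 0 < f x \<and> cdfF M x < 1 \<and> 0 < f y \<and> cdfF M y < 1 \<longrightarrow>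
             f x / (1 - cdfF M x) \<le> f y / (1 - cdfF M y)))"

datatype hint = OneSample | ValueRange

text \<open>Distribution of the hint: one-sample hint = one draw from M; value-range hint carries no
  information beyond the (known) range, modelled as the constant 0.\<close>
definition hint_measure :: "hint \<Rightarrow> real measure \<Rightarrow> real measure" where
  "hint_measure h M = (case h of OneSample \<Rightarrow> M | ValueRange \<Rightarrow> return borel 0)"

text \<open>Probability that the adaptive price sequence P (given the previous answers) produces the
  answer sequence bs, when each query uses a fresh independent value drawn from M.\<close>
definition path_prob :: "real measure \<Rightarrow> (bool list \<Rightarrow> real) \<Rightarrow> bool list \<Rightarrow> real" where
  "path_prob M P bs = (\<Prod>t<length bs. if bs ! t then sellq M (P (take t bs)) else cdfF M (P (take t bs)))"

text \<open>Success probability of a randomized m-query algorithm: random seed r ~ R, hint x,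
  query prices P r x (previous answers), output price Out r x (all m answers).\<close>
definition succ_prob :: "real measure \<Rightarrow> hint \<Rightarrow> real \<Rightarrow> nat \<Rightarrow> real measure \<Rightarrow>
    (real \<Rightarrow> real \<Rightarrow> bool list \<Rightarrow> real) \<Rightarrow> (real \<Rightarrow> real \<Rightarrow> bool list \<Rightarrow> real) \<Rightarrow> real" where
  "succ_prob M h eps m R P Out =
     (LINT r|R. LINT x|hint_measure h M.
        (\<Sum>bs\<in>{bs::bool list. length bs = m}.
           path_prob M (P r x) bs *
           (if (1 - eps) * opt_rev M \<le> Rev M (Out r x bs) then 1 else 0)))"

end

theory Submission
  imports Defs
begin

definition pw :: "real \<Rightarrow> real \<Rightarrow> real \<Rightarrow> real \<Rightarrow> real \<Rightarrow> real" where
  "pw a d t e x = a * indicator {1..<t} x + d * indicator {t..e} x"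

definition Mf :: "real \<Rightarrow> real \<Rightarrow> real \<Rightarrow> real \<Rightarrow> real measure" where
  "Mf a d t e = density lborel (\<lambda>x. ennreal (pw a d t e x))"

definition Qf :: "real \<Rightarrow> real \<Rightarrow> real \<Rightarrow> real \<Rightarrow> real \<Rightarrow> real" where
  "Qf a d t e p = a * max 0 (t - max 1 p) + d * max 0 (e - max t p)"

lemma pw_meas[measurable]: "pw a d t e \<in> borel_measurable borel"
  unfolding pw_def by measurable

lemma pw_nonneg: "0 \<le> a \<Longrightarrow> 0 \<le> d \<Longrightarrow> 0 \<le> pw a d t e x"
  unfolding pw_def by (auto simp: indicator_def)

lemma sets_Mf[simp]: "sets (Mf a d t e) = sets borel" unfolding Mf_def by simp
lemma space_Mf[simp]: "space (Mf a d t e) = UNIV" unfolding Mf_def by simp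

lemma emeasure_lborel_Ico': "emeasure lborel {l..<u::real} = ennreal (u - l)"
  by (cases "l \<le> u") (auto simp: ennreal_neg)

lemma emeasure_lborel_Icc': "emeasure lborel {l..u::real} = ennreal (u - l)"
  by (cases "l \<le> u") (auto simp: ennreal_neg)

lemma emeasure_Mf:
  assumes "0 \<le> a" "0 \<le> d" "A \<in> sets borel"
  shows "emeasure (Mf a d t e) A = ennreal a * emeasure lborel ({1..<t} \<inter> A) + ennreal d * emeasure lborel ({t..e} \<inter> A)"
proof -
  have "emeasure (Mf a d t e) A = (\<integral>\<^sup>+x. ennreal (pw a d t e x) * indicator A x \<partial>lborel)"
    unfolding Mf_def using assms by (simp add: emeasure_density)
  also have "\<dots> = (\<integral>\<^sup>+x. ennreal a * indicator ({1..<t} \<inter> A) x + ennreal d * indicator ({t..e} \<inter> A) x \<partial>lborel)"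
    apply (rule nn_integral_cong) using assms by (auto simp: pw_def indicator_def)
  also have "\<dots> = ennreal a * emeasure lborel ({1..<t} \<inter> A) + ennreal d * emeasure lborel ({t..e} \<inter> A)"
    using assms by (simp add: nn_integral_add nn_integral_cmult)
  finally show ?thesis .
qed

lemma Qf_nonneg: "0 \<le> a \<Longrightarrow> 0 \<le> d \<Longrightarrow> 0 \<le> Qf a d t e p"
  unfolding Qf_def by simp

lemma sellq_Mf:
  assumes "0 \<le> a" "0 \<le> d"
  shows "sellq (Mf a d t e) p = Qf a d t e p"
proof -
  have 1: "{1..<t} \<inter> {p..} = {max 1 p..<t}" by auto
  have 2: "{t..e} \<inter> {p..} = {max t p..e}" by auto
  have "emeasure (Mf a d t e) {p..} = ennreal a * ennreal (t - max 1 p) + ennreal d * ennreal (e - max t p)"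
    using assms by (simp add: emeasure_Mf 1 2 emeasure_lborel_Ico' emeasure_lborel_Icc')
  also have "\<dots> = ennreal (Qf a d t e p)"
  proof -
    have x: "ennreal a * ennreal (t - max 1 p) = ennreal (a * max 0 (t - max 1 p))"
      using assms by (metis ennreal_max_0 ennreal_mult max.cobounded1)
    have y: "ennreal d * ennreal (e - max t p) = ennreal (d * max 0 (e - max t p))"
      using assms by (metis ennreal_max_0 ennreal_mult max.cobounded1)
    show ?thesis unfolding x y Qf_def using assms by (simp add: ennreal_plus)
  qed
  finally show ?thesis unfolding sellq_def measure_def
    using Qf_nonneg[OF assms] by simp
qed

locale fam =
  fixes a d t e :: real
  assumes a0: "0 \<le> a" and ad: "a \<le> d" and t1: "1 \<le> t" and te: "t < e"
    and norm: "a * (t - 1) + d * (e - t) = 1"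
begin

lemma d0: "0 \<le> d" using a0 ad by linarith

lemma prob: "prob_space (Mf a d t e)"
proof (rule prob_spaceI)
  have "emeasure (Mf a d t e) UNIV = ennreal a * ennreal (t - 1) + ennreal d * ennreal (e - t)"
    using a0 d0 by (simp add: emeasure_Mf emeasure_lborel_Ico' emeasure_lborel_Icc')
  also have "\<dots> = ennreal (a * (t - 1) + d * (e - t))"
    using a0 d0 t1 te by (simp add: ennreal_plus ennreal_mult)
  finally show "emeasure (Mf a d t e) (space (Mf a d t e)) = 1" using norm by simp
qed

lemma supp: assumes "e \<le> 2" shows "measure (Mf a d t e) {1..2} = 1"
proof -
  have 1: "{1..<t} \<inter> {1..2} = {1..<t}" using assms te by auto
  have 2: "{t..e} \<inter> {1..2} = {t..e}" using assms te t1 by auto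
  have "emeasure (Mf a d t e) {1..2} = ennreal a * ennreal (t - 1) + ennreal d * ennreal (e - t)"
    using emeasure_Mf[OF a0 d0, of "{1..2}" t e] unfolding 1 2 by (simp add: emeasure_lborel_Ico' emeasure_lborel_Icc')
  also have "\<dots> = ennreal (a * (t - 1) + d * (e - t))"
    using a0 d0 t1 te by (simp add: ennreal_plus ennreal_mult)
  finally show ?thesis using norm unfolding measure_def by simp
qed

lemma sellq: "sellq (Mf a d t e) p = Qf a d t e p"
  using sellq_Mf a0 d0 by blast

lemma cdf: "cdfF (Mf a d t e) p = 1 - Qf a d t e p"
proof -
  interpret prob_space "Mf a d t e" by (rule prob)
  have "{..<p} = space (Mf a d t e) - {p..}" by auto
  then have "cdfF (Mf a d t e) p = 1 - measure (Mf a d t e) {p..}"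
    unfolding cdfF_def using prob_compl[of "{p..}"] by simp
  then show ?thesis using sellq unfolding sellq_def by simp
qed

lemma Q_left: assumes "p \<le> 1" shows "Qf a d t e p = 1"
proof -
  have "max 1 p = 1" "max t p = t" using assms t1 by auto
  then show ?thesis using norm t1 te unfolding Qf_def by simp
qed
lemma Q_mid: "1 \<le> p \<Longrightarrow> p \<le> t \<Longrightarrow> Qf a d t e p = 1 - a * (p - 1)"
  using norm t1 te unfolding Qf_def by (simp add: max_def algebra_simps)
lemma Q_right: "t \<le> p \<Longrightarrow> p \<le> e \<Longrightarrow> Qf a d t e p = d * (e - p)"
  using norm t1 te unfolding Qf_def by (simp add: max_def algebra_simps)
lemma Q_end: "e \<le> p \<Longrightarrow> Qf a d t e p = 0"
  using norm t1 te unfolding Qf_def by (simp add: max_def algebra_simps)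

lemma mhr: "MHR (Mf a d t e)"
  unfolding MHR_def
proof (intro exI conjI allI impI)
  show "pw a d t e \<in> borel_measurable borel" by simp
  show "0 \<le> pw a d t e x" for x using pw_nonneg a0 d0 by blast
  show "Mf a d t e = density lborel (\<lambda>x. ennreal (pw a d t e x))" unfolding Mf_def ..
  fix x y assume H: "x \<le> y \<and> 0 < pw a d t e x \<and> cdfF (Mf a d t e) x < 1 \<and>
       0 < pw a d t e y \<and> cdfF (Mf a d t e) y < 1"
  then have Qx: "0 < Qf a d t e x" and Qy: "0 < Qf a d t e y" and xy: "x \<le> y" by (auto simp: cdf)
  have dte: "d * (e - t) = 1 - a * (t - 1)" using norm by simp
  show "pw a d t e x / (1 - cdfF (Mf a d t e) x) \<le> pw a d t e y / (1 - cdfF (Mf a d t e) y)"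
  proof (cases "x < t")
    case True
    have x1: "1 \<le> x" by (rule ccontr) (use H True t1 in \<open>auto simp: pw_def indicator_def\<close>)
    have px: "pw a d t e x = a" using True x1 by (simp add: pw_def indicator_def)
    have Qxv: "Qf a d t e x = 1 - a * (x - 1)" using Q_mid x1 True by simp
    show ?thesis
    proof (cases "y < t")
      case True
      have py: "pw a d t e y = a" using True x1 xy by (simp add: pw_def indicator_def)
      have Qyv: "Qf a d t e y = 1 - a * (y - 1)" using Q_mid x1 xy True by simp
      have "a * (1 - a * (y - 1)) \<le> a * (1 - a * (x - 1))" using a0 xy
        by (intro mult_left_mono) (auto intro: mult_left_mono)
      then show ?thesis unfolding cdf px py using Qx Qy Qxv Qyv
        by (simp add: divide_simps mult.commute)
    next
      case False
      have y2: "y \<le> e" by (rule ccontr) (use H False t1 in \<open>auto simp: pw_def indicator_def\<close>)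
      have py: "pw a d t e y = d" using y2 False t1 by (simp add: pw_def indicator_def)
      have Qyv: "Qf a d t e y = d * (e - y)" using Q_right False y2 by simp
      have ey: "0 < e - y" using Qy Qyv d0 by (auto simp: zero_less_mult_iff)
      have "a * (e - y) \<le> a * (e - t)" using a0 False by (simp add: mult_left_mono)
      also have "\<dots> \<le> d * (e - t)" using ad te by (simp add: mult_right_mono)
      also have "\<dots> \<le> 1 - a * (x - 1)" using dte a0 True by (simp add: mult_left_mono)
      finally have "a * (e - y) \<le> 1 - a * (x - 1)" .
      have dpos: "0 < d" using H py by simp
      have "a / Qf a d t e x \<le> 1 / (e - y)"
        using \<open>a * (e - y) \<le> 1 - a * (x - 1)\<close> Qx Qxv ey by (simp add: divide_simps)
      also have "1 / (e - y) = d / Qf a d t e y" using Qyv dpos by simp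
      finally show ?thesis unfolding cdf px py by simp
    qed
  next
    case False
    have y2: "y \<le> e" by (rule ccontr) (use H False t1 in \<open>auto simp: pw_def indicator_def\<close>)
    have x2: "x \<le> e" using xy y2 by simp
    have py: "pw a d t e y = d" using y2 xy False t1 by (simp add: pw_def indicator_def)
    have px: "pw a d t e x = d" using x2 False t1 by (simp add: pw_def indicator_def)
    have Qxv: "Qf a d t e x = d * (e - x)" using Q_right False x2 by simp
    have Qyv: "Qf a d t e y = d * (e - y)" using Q_right False xy y2 by simp
    have ey: "0 < e - y" using Qy Qyv d0 by (auto simp: zero_less_mult_iff)
    have dpos: "0 < d" using H py by simp
    have "d / Qf a d t e x = 1 / (e - x)" using Qxv dpos by simp
    also have "\<dots> \<le> 1 / (e - y)" using ey xy by (simp add: frac_le)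
    also have "\<dots> = d / Qf a d t e y" using Qyv dpos by simp
    finally show ?thesis unfolding cdf px py by simp
  qed
qed

end

definition pp :: "(real \<Rightarrow> real) \<Rightarrow> (bool list \<Rightarrow> real) \<Rightarrow> bool list \<Rightarrow> real" where
  "pp a P bs = (\<Prod>i<length bs. if bs ! i then a (P (take i bs)) else 1 - a (P (take i bs)))"

definition fct :: "(real \<Rightarrow> real) \<Rightarrow> bool \<Rightarrow> real \<Rightarrow> real" where
  "fct a c p = (if c then a p else 1 - a p)"

lemma pp_Nil[simp]: "pp a P [] = 1" unfolding pp_def by simp

lemma pp_Cons: "pp a P (c # bs) = fct a c (P []) * pp a (\<lambda>l. P (c # l)) bs"
proof -
  have "pp a P (c # bs) = fct a c (P []) * (\<Prod>i<length bs. if (c # bs) ! Suc i then a (P (take (Suc i) (c # bs))) else 1 - a (P (take (Suc i) (c # bs))))"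
    unfolding pp_def fct_def length_Cons by (subst prod.lessThan_Suc_shift) simp
  also have "(\<Prod>i<length bs. if (c # bs) ! Suc i then a (P (take (Suc i) (c # bs))) else 1 - a (P (take (Suc i) (c # bs)))) = pp a (\<lambda>l. P (c # l)) bs"
    unfolding pp_def by (intro prod.cong refl) simp
  finally show ?thesis .
qed

lemma lists_fin: "finite {l :: bool list. length l = m}"
proof -
  have "{l :: bool list. length l = m} = {l. set l \<subseteq> UNIV \<and> length l = m}" by auto
  then show ?thesis using finite_lists_length_eq[of "UNIV :: bool set" m] by simp
qed

lemma sum_lists_Suc:
  fixes F :: "bool list \<Rightarrow> real"
  shows "(\<Sum>bs\<in>{bs. length bs = Suc m}. F bs) =
     (\<Sum>l\<in>{l. length l = m}. F (True # l)) + (\<Sum>l\<in>{l. length l = m}. F (False # l))"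
proof -
  let ?S = "{l :: bool list. length l = m}"
  have eq: "{bs. length bs = Suc m} = Cons True ` ?S \<union> Cons False ` ?S"
  proof
    show "{bs. length bs = Suc m} \<subseteq> Cons True ` ?S \<union> Cons False ` ?S"
    proof
      fix bs :: "bool list" assume "bs \<in> {bs. length bs = Suc m}"
      then obtain c l where "bs = c # l" "length l = m" by (auto simp: length_Suc_conv)
      then show "bs \<in> Cons True ` ?S \<union> Cons False ` ?S" by (cases c) auto
    qed
  qed auto
  have "(\<Sum>bs\<in>{bs. length bs = Suc m}. F bs) = (\<Sum>bs\<in>Cons True ` ?S. F bs) + (\<Sum>bs\<in>Cons False ` ?S. F bs)"
    unfolding eq by (rule sum.union_disjoint) (auto intro: lists_fin)
  also have "\<dots> = (\<Sum>l\<in>?S. F (True # l)) + (\<Sum>l\<in>?S. F (False # l))"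
    by (simp add: sum.reindex)
  finally show ?thesis .
qed

lemma pp_sum: "(\<Sum>bs\<in>{bs. length bs = m}. pp a P bs) = 1"
proof (induction m arbitrary: P)
  case 0
  have "{bs :: bool list. length bs = 0} = {[]}" by auto
  then show ?case by simp
next
  case (Suc m)
  show ?case unfolding sum_lists_Suc pp_Cons
    by (simp add: sum_distrib_left[symmetric] Suc fct_def)
qed

lemma pp_fct: "pp a P bs = (\<Prod>i<length bs. fct a (bs ! i) (P (take i bs)))"
  unfolding pp_def fct_def ..

lemma pp_nonneg: assumes "\<And>p. 0 \<le> a p \<and> a p \<le> 1" shows "0 \<le> pp a P bs"
  unfolding pp_fct
proof (rule prod_nonneg)
  fix i show "0 \<le> fct a (bs ! i) (P (take i bs))" using assms[of "P (take i bs)"] unfolding fct_def by simp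
qed

lemma pp_zero:
  assumes "\<And>p. b p = 0 \<longrightarrow> a p = 0" "\<And>p. b p = 1 \<longrightarrow> a p = 1" "pp b P bs = 0"
  shows "pp a P bs = 0"
proof -
  have "\<exists>i\<in>{..<length bs}. fct b (bs ! i) (P (take i bs)) = 0"
    using assms(3) unfolding pp_fct by (simp only: prod_zero_iff[OF finite_lessThan])
  then obtain i where i: "i < length bs" "fct b (bs ! i) (P (take i bs)) = 0" by blast
  have "fct a (bs ! i) (P (take i bs)) = 0"
  proof (cases "bs ! i")
    case True then show ?thesis using i(2) assms(1)[of "P (take i bs)"] unfolding fct_def by simp
  next
    case False then show ?thesis using i(2) assms(2)[of "P (take i bs)"] unfolding fct_def by simp
  qed
  then have "\<exists>i\<in>{..<length bs}. fct a (bs ! i) (P (take i bs)) = 0" using i(1) by blast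
  then show ?thesis unfolding pp_fct by (simp only: prod_zero_iff[OF finite_lessThan])
qed

lemma chi_tree:
  assumes b01: "\<And>p. 0 \<le> b p \<and> b p \<le> 1"
    and chiH: "\<And>p. (a p)\<^sup>2 / b p + (1 - a p)\<^sup>2 / (1 - b p) \<le> 1 + chi" and chi0: "0 \<le> chi"
  shows "(\<Sum>bs\<in>{bs. length bs = m}. (pp a P bs)\<^sup>2 / pp b P bs) \<le> (1 + chi) ^ m"
proof (induction m arbitrary: P)
  case 0
  have "{bs :: bool list. length bs = 0} = {[]}" by auto
  then show ?case by simp
next
  case (Suc m)
  let ?S = "{l :: bool list. length l = m}"
  define u where "u c = (fct a c (P []))\<^sup>2 / fct b c (P [])" for c
  have u0: "0 \<le> u c" for c unfolding u_def fct_def using b01[of "P []"] by auto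
  have split: "(fct a c (P []) * pp a (\<lambda>l. P (c # l)) l)\<^sup>2 / (fct b c (P []) * pp b (\<lambda>l. P (c # l)) l)
      = u c * ((pp a (\<lambda>l. P (c # l)) l)\<^sup>2 / pp b (\<lambda>l. P (c # l)) l)" for c l
    unfolding u_def by (simp add: power_mult_distrib)
  have "(\<Sum>bs\<in>{bs. length bs = Suc m}. (pp a P bs)\<^sup>2 / pp b P bs)
     = u True * (\<Sum>l\<in>?S. (pp a (\<lambda>l. P (True # l)) l)\<^sup>2 / pp b (\<lambda>l. P (True # l)) l)
     + u False * (\<Sum>l\<in>?S. (pp a (\<lambda>l. P (False # l)) l)\<^sup>2 / pp b (\<lambda>l. P (False # l)) l)"
  proof -
    have eqc: "(pp a P (c # l))\<^sup>2 / pp b P (c # l) = u c * ((pp a (\<lambda>l. P (c # l)) l)\<^sup>2 / pp b (\<lambda>l. P (c # l)) l)" for c l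
      unfolding pp_Cons by (rule split)
    show ?thesis by (simp only: sum_lists_Suc eqc sum_distrib_left)
  qed
  also have "\<dots> \<le> u True * (1 + chi) ^ m + u False * (1 + chi) ^ m"
    by (rule add_mono[OF mult_left_mono[OF Suc.IH u0] mult_left_mono[OF Suc.IH u0]])
  also have "\<dots> = (u True + u False) * (1 + chi) ^ m" by (simp add: algebra_simps)
  also have "\<dots> \<le> (1 + chi) * (1 + chi) ^ m"
    using chiH[of "P []"] chi0 unfolding u_def fct_def by (intro mult_right_mono) auto
  finally show ?case by simp
qed

lemma key_ineq:
  fixes x y g l :: real
  assumes "0 \<le> x" "0 \<le> y" "y = 0 \<longrightarrow> x = 0" "0 \<le> g" "g \<le> 1" "0 < l"
  shows "x * g \<le> y * g + (x\<^sup>2 / y - 2 * x + y) / (2 * l) + l * y / 2"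
proof (cases "y = 0")
  case True then show ?thesis using assms by simp
next
  case False
  then have y: "0 < y" using assms by simp
  define u where "u = \<bar>x - y\<bar>"
  have u2: "u\<^sup>2 = (x - y)\<^sup>2" unfolding u_def by simp
  have ly: "0 < 2 * l * y" using y assms(6) by simp
  have e: "(x\<^sup>2 / y - 2 * x + y) / (2 * l) = u\<^sup>2 / (2 * l * y)"
    unfolding u2 using y assms(6) by (simp add: field_simps power2_eq_square)
  have e2: "u\<^sup>2 / (2 * l * y) + l * y / 2 - u = (u - l * y)\<^sup>2 / (2 * l * y)"
  proof -
    have "(u - l * y)\<^sup>2 = u\<^sup>2 + (l * y) * (l * y) - 2 * u * (l * y)" by (simp add: power2_eq_square algebra_simps)
    then have "(u - l * y)\<^sup>2 / (2 * l * y) = u\<^sup>2 / (2 * l * y) + (l * y) * (l * y) / (2 * l * y) - 2 * u * (l * y) / (2 * l * y)"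
      by (simp add: add_divide_distrib diff_divide_distrib)
    also have "(l * y) * (l * y) / (2 * l * y) = l * y / 2" using ly by (simp add: field_simps)
    also have "2 * u * (l * y) / (2 * l * y) = u" using y assms(6) by (simp add: field_simps)
    finally show ?thesis by simp
  qed
  have "0 \<le> (u - l * y)\<^sup>2 / (2 * l * y)" using ly by simp
  then have main: "u \<le> u\<^sup>2 / (2 * l * y) + l * y / 2" using e2 by linarith
  have "(x - y) * g \<le> \<bar>x - y\<bar> * g" using assms by (simp add: mult_right_mono)
  also have "\<dots> \<le> u" unfolding u_def using assms by (simp add: mult_left_le)
  finally have "(x - y) * g \<le> u" .
  then show ?thesis unfolding e using main by (simp add: algebra_simps)
qed

lemma tree_bound:
  fixes a :: "nat \<Rightarrow> real \<Rightarrow> real" and b :: "real \<Rightarrow> real" and g :: "nat \<Rightarrow> bool list \<Rightarrow> real"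
  assumes a01: "\<And>j p. j < K \<Longrightarrow> 0 \<le> a j p \<and> a j p \<le> 1"
    and b01: "\<And>p. 0 \<le> b p \<and> b p \<le> 1"
    and z0: "\<And>j p. j < K \<Longrightarrow> b p = 0 \<longrightarrow> a j p = 0"
    and z1: "\<And>j p. j < K \<Longrightarrow> b p = 1 \<longrightarrow> a j p = 1"
    and chiH: "\<And>j p. j < K \<Longrightarrow> (a j p)\<^sup>2 / b p + (1 - a j p)\<^sup>2 / (1 - b p) \<le> 1 + chi"
    and chi0: "0 \<le> chi"
    and g01: "\<And>j bs. 0 \<le> g j bs \<and> g j bs \<le> 1"
    and gsum: "\<And>bs. (\<Sum>j<K. g j bs) \<le> 1"
    and l0: "0 < l"
  shows "(\<Sum>j<K. \<Sum>bs\<in>{bs. length bs = m}. pp (a j) P bs * g j bs)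
          \<le> 1 + K * (((1 + chi) ^ m - 1) / (2 * l) + l / 2)"
proof -
  let ?S = "{bs :: bool list. length bs = m}"
  have one: "(\<Sum>bs\<in>?S. pp (a j) P bs * g j bs)
      \<le> (\<Sum>bs\<in>?S. pp b P bs * g j bs) + (((1 + chi) ^ m - 1) / (2 * l) + l / 2)" if j: "j < K" for j
  proof -
    have "(\<Sum>bs\<in>?S. pp (a j) P bs * g j bs) \<le> (\<Sum>bs\<in>?S. pp b P bs * g j bs
        + ((pp (a j) P bs)\<^sup>2 / pp b P bs - 2 * pp (a j) P bs + pp b P bs) / (2 * l) + l * pp b P bs / 2)"
    proof (rule sum_mono)
      fix bs
      show "pp (a j) P bs * g j bs \<le> pp b P bs * g j bs
        + ((pp (a j) P bs)\<^sup>2 / pp b P bs - 2 * pp (a j) P bs + pp b P bs) / (2 * l) + l * pp b P bs / 2"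
        apply (rule key_ineq)
        using pp_nonneg[of "a j" P bs] a01[OF j] apply blast
        using pp_nonneg[of b P bs] b01 apply blast
        using pp_zero[of b "a j" P bs] z0[OF j] z1[OF j] apply blast
        using g01 l0 by auto
    qed
    also have "\<dots> = (\<Sum>bs\<in>?S. pp b P bs * g j bs)
        + ((\<Sum>bs\<in>?S. (pp (a j) P bs)\<^sup>2 / pp b P bs) - 2 * (\<Sum>bs\<in>?S. pp (a j) P bs) + (\<Sum>bs\<in>?S. pp b P bs)) / (2 * l)
        + l * (\<Sum>bs\<in>?S. pp b P bs) / 2"
    proof -
      have h1: "(\<Sum>bs\<in>?S. ((pp (a j) P bs)\<^sup>2 / pp b P bs - 2 * pp (a j) P bs + pp b P bs) / (2 * l))
          = (\<Sum>bs\<in>?S. ((pp (a j) P bs)\<^sup>2 / pp b P bs - 2 * pp (a j) P bs + pp b P bs)) / (2 * l)"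
        by (simp add: sum_divide_distrib)
      have h2: "(\<Sum>bs\<in>?S. ((pp (a j) P bs)\<^sup>2 / pp b P bs - 2 * pp (a j) P bs + pp b P bs))
          = (\<Sum>bs\<in>?S. (pp (a j) P bs)\<^sup>2 / pp b P bs) - 2 * (\<Sum>bs\<in>?S. pp (a j) P bs) + (\<Sum>bs\<in>?S. pp b P bs)"
        by (simp add: sum.distrib sum_subtractf sum_distrib_left)
      have h3: "(\<Sum>bs\<in>?S. l * pp b P bs / 2) = l * (\<Sum>bs\<in>?S. pp b P bs) / 2"
        by (simp add: sum_distrib_left sum_divide_distrib)
      show ?thesis using h1 h2 h3 by (simp add: sum.distrib)
    qed
    also have "\<dots> = (\<Sum>bs\<in>?S. pp b P bs * g j bs)
        + ((\<Sum>bs\<in>?S. (pp (a j) P bs)\<^sup>2 / pp b P bs) - 1) / (2 * l) + l / 2"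
      by (simp add: pp_sum)
    also have "\<dots> \<le> (\<Sum>bs\<in>?S. pp b P bs * g j bs) + (((1 + chi) ^ m - 1) / (2 * l) + l / 2)"
      using chi_tree[where b=b and a="a j" and chi=chi and m=m and P=P] b01 chiH[OF j] chi0 l0
      by (simp add: divide_right_mono)
    finally show ?thesis .
  qed
  have "(\<Sum>j<K. \<Sum>bs\<in>?S. pp (a j) P bs * g j bs)
     \<le> (\<Sum>j<K. (\<Sum>bs\<in>?S. pp b P bs * g j bs) + (((1 + chi) ^ m - 1) / (2 * l) + l / 2))"
    by (rule sum_mono) (use one in simp)
  also have "\<dots> = (\<Sum>bs\<in>?S. pp b P bs * (\<Sum>j<K. g j bs)) + K * (((1 + chi) ^ m - 1) / (2 * l) + l / 2)"
    by (simp add: sum.distrib sum_distrib_left sum.swap[of _ "{..<K}"])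
  also have "(\<Sum>bs\<in>?S. pp b P bs * (\<Sum>j<K. g j bs)) \<le> (\<Sum>bs\<in>?S. pp b P bs)"
    by (rule sum_mono) (use gsum pp_nonneg[of b] b01 in \<open>auto intro: mult_left_le\<close>)
  also have "(\<Sum>bs\<in>?S. pp b P bs) = 1" by (rule pp_sum)
  finally show ?thesis by simp
qed

lemma tree_bound0:
  fixes a :: "nat \<Rightarrow> real \<Rightarrow> real" and g :: "nat \<Rightarrow> bool list \<Rightarrow> real"
  assumes gsum: "\<And>bs. (\<Sum>j<K. g j bs) \<le> 1"
  shows "(\<Sum>j<K. \<Sum>bs\<in>{bs. length bs = 0}. pp (a j) P bs * g j bs) \<le> 1"
proof -
  have "{bs :: bool list. length bs = 0} = {[]}" by auto
  then show ?thesis using gsum[of "[]"] by simp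
qed

lemma sellq_antimono: assumes "finite_measure M" "sets M = sets borel" "p \<le> q"
  shows "sellq M q \<le> sellq M p"
proof -
  interpret finite_measure M by fact
  show ?thesis unfolding sellq_def using assms by (intro finite_measure_mono) auto
qed

lemma cdfF_mono: assumes "finite_measure M" "sets M = sets borel" "p \<le> q"
  shows "cdfF M p \<le> cdfF M q"
proof -
  interpret finite_measure M by fact
  show ?thesis unfolding cdfF_def using assms by (intro finite_measure_mono) auto
qed

lemma sellq_meas: assumes "finite_measure M" "sets M = sets borel"
  shows "sellq M \<in> borel_measurable borel"
proof -
  have "(\<lambda>p. - sellq M p) \<in> borel_measurable borel"
    by (rule borel_measurable_mono) (auto simp: mono_def intro: sellq_antimono[OF assms])
  then have "(\<lambda>p. - (- sellq M p)) \<in> borel_measurable borel" by measurable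
  then show ?thesis by simp
qed

lemma cdfF_meas: assumes "finite_measure M" "sets M = sets borel"
  shows "cdfF M \<in> borel_measurable borel"
  by (rule borel_measurable_mono) (auto simp: mono_def intro: cdfF_mono[OF assms])

lemma Rev_meas: assumes "finite_measure M" "sets M = sets borel"
  shows "Rev M \<in> borel_measurable borel"
proof -
  have [measurable]: "sellq M \<in> borel_measurable borel" by (rule sellq_meas[OF assms])
  show ?thesis unfolding Rev_def[abs_def] by measurable
qed

definition Gf :: "real measure \<Rightarrow> real \<Rightarrow> nat \<Rightarrow> (bool list \<Rightarrow> real) \<Rightarrow> (bool list \<Rightarrow> real) \<Rightarrow> real" where
  "Gf M eps m Pq Oq = (\<Sum>bs\<in>{bs::bool list. length bs = m}.
           path_prob M Pq bs * (if (1 - eps) * opt_rev M \<le> Rev M (Oq bs) then 1 else 0))"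

lemma Gf_meas:
  assumes "finite_measure M" "sets M = sets borel"
    and P: "\<And>bs. (\<lambda>x. P x bs) \<in> borel_measurable borel"
    and O: "\<And>bs. (\<lambda>x. Out x bs) \<in> borel_measurable borel"
  shows "(\<lambda>x. Gf M eps m (P x) (Out x)) \<in> borel_measurable borel"
proof -
  have [measurable]: "sellq M \<in> borel_measurable borel" "cdfF M \<in> borel_measurable borel"
     "Rev M \<in> borel_measurable borel"
    using sellq_meas[OF assms(1,2)] cdfF_meas[OF assms(1,2)] Rev_meas[OF assms(1,2)] by auto
  have [measurable]: "(\<lambda>x. P x bs) \<in> borel_measurable borel" "(\<lambda>x. Out x bs) \<in> borel_measurable borel" for bs
    using P O by auto
  show ?thesis unfolding Gf_def path_prob_def by measurable
qed

lemma Gf_nonneg: "0 \<le> Gf M eps m Pq Oq"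
  unfolding Gf_def path_prob_def sellq_def cdfF_def by (intro sum_nonneg mult_nonneg_nonneg prod_nonneg) auto

lemma succ_Gf: "succ_prob M h eps m R P Out = (LINT r|R. LINT x|hint_measure h M. Gf M eps m (P r x) (Out r x))"
  unfolding succ_prob_def Gf_def ..

lemma integ_bound:
  fixes Ms :: "nat \<Rightarrow> real measure" and f :: "nat \<Rightarrow> real \<Rightarrow> real" and gd :: "real \<Rightarrow> real"
  assumes Mdef: "\<And>j. j < K \<Longrightarrow> Ms j = density lborel (\<lambda>x. ennreal (f j x))"
    and prob: "\<And>j. j < K \<Longrightarrow> prob_space (Ms j)"
    and fm: "\<And>j. j < K \<Longrightarrow> f j \<in> borel_measurable borel"
    and f0: "\<And>j x. j < K \<Longrightarrow> 0 \<le> f j x"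
    and fg: "\<And>j x. j < K \<Longrightarrow> f j x \<le> gd x"
    and gint: "integrable lborel gd" and gpos: "\<And>x. 0 \<le> gd x"
    and gZ: "integral\<^sup>L lborel gd \<le> Z" and Z1: "1 \<le> Z"
    and R: "prob_space R" "sets R = sets borel"
    and Pm: "\<forall>bs. (\<lambda>(r, x). P r x bs) \<in> borel_measurable (borel \<Otimes>\<^sub>M borel)"
    and Om: "\<forall>bs. (\<lambda>(r, x). Out r x bs) \<in> borel_measurable (borel \<Otimes>\<^sub>M borel)"
    and pt: "\<And>r x. (\<Sum>j<K. Gf (Ms j) eps m (P r x) (Out r x)) \<le> B"
    and succ: "\<And>j. j < K \<Longrightarrow> 2/15 \<le> succ_prob (Ms j) h eps m R P Out"
  shows "real K * (2/15) \<le> Z * B"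
proof -
  have sets_Ms: "sets (Ms j) = sets borel" if "j < K" for j using Mdef[OF that] by simp
  have fin: "finite_measure (Ms j)" if "j < K" for j
    using prob[OF that] unfolding prob_space_def by blast
  have B0: "0 \<le> B" using pt[of 0 0] Gf_nonneg sum_nonneg by (metis (no_types, lifting) order_trans)
  have Pr: "(\<lambda>x. P r x bs) \<in> borel_measurable borel" for r bs
  proof -
    have "(\<lambda>x. (\<lambda>(r, x). P r x bs) (r, x)) \<in> borel_measurable borel"
      by (rule measurable_compose[OF measurable_Pair1'[of r borel borel] Pm[rule_format]]) simp
    then show ?thesis by simp
  qed
  have Or: "(\<lambda>x. Out r x bs) \<in> borel_measurable borel" for r bs
  proof -
    have "(\<lambda>x. (\<lambda>(r, x). Out r x bs) (r, x)) \<in> borel_measurable borel"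
      by (rule measurable_compose[OF measurable_Pair1'[of r borel borel] Om[rule_format]]) simp
    then show ?thesis by simp
  qed
  define G where "G j r x = Gf (Ms j) eps m (P r x) (Out r x)" for j r x
  have Gm: "G j r \<in> borel_measurable borel" if "j < K" for j r
    unfolding G_def[abs_def] by (rule Gf_meas[OF fin[OF that] sets_Ms[OF that] Pr Or])
  have G0: "0 \<le> G j r x" for j r x unfolding G_def by (rule Gf_nonneg)
  have GB: "G j r x \<le> B" if "j < K" for j r x
  proof -
    have "G j r x \<le> (\<Sum>i<K. G i r x)" using that G0 by (intro member_le_sum) auto
    also have "\<dots> \<le> B" unfolding G_def by (rule pt)
    finally show ?thesis .
  qed
  define S where "S j r = (LINT x|hint_measure h (Ms j). G j r x)" for j r
  have succS: "succ_prob (Ms j) h eps m R P Out = (LINT r|R. S j r)" for j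
    unfolding succ_Gf S_def G_def ..
  have gm: "gd \<in> borel_measurable borel" using gint by (simp add: borel_measurable_integrable)
  have ptS: "(\<Sum>j<K. S j r) \<le> Z * B" for r
  proof (cases h)
    case ValueRange
    have "S j r = G j r 0" if "j < K" for j
      unfolding S_def ValueRange hint_measure_def using Gm[OF that] by (simp add: integral_return)
    then have "(\<Sum>j<K. S j r) = (\<Sum>j<K. G j r 0)" by simp
    also have "\<dots> \<le> B" unfolding G_def by (rule pt)
    also have "\<dots> \<le> Z * B" using Z1 B0 by (simp add: mult_right_mono[of 1 Z B, simplified])
    finally show ?thesis .
  next
    case OneSample
    have intg: "integrable lborel (\<lambda>x. gd x * G j r x)" if "j < K" for j
      apply (rule Bochner_Integration.integrable_bound[where f="\<lambda>x. B * gd x"])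
      using gint apply simp
      using gm Gm[OF that] apply measurable
      using GB[OF that] G0 fg[OF that] f0[OF that] B0
      by (auto intro!: AE_I2 simp: abs_mult mult.commute[of B] intro: order_trans[OF _ fg[OF that]] mult_mono)
    have intf: "integrable lborel (\<lambda>x. f j x * G j r x)" if "j < K" for j
      apply (rule Bochner_Integration.integrable_bound[where f="\<lambda>x. B * gd x"])
      using gint apply simp
      using fm[OF that] Gm[OF that] apply measurable
    proof (rule AE_I2)
      fix x
      have g0: "0 \<le> gd x" using fg[OF that, of x] f0[OF that, of x] by linarith
      have "f j x * G j r x \<le> gd x * B"
        using fg[OF that, of x] f0[OF that, of x] GB[OF that, of r x] G0[of j r x] g0 by (intro mult_mono) auto
      then show "norm (f j x * G j r x) \<le> norm (B * gd x)"
        using f0[OF that, of x] G0[of j r x] g0 B0 by (simp add: abs_mult mult.commute)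
    qed
    have "S j r = (LINT x|lborel. f j x * G j r x)" if "j < K" for j
      unfolding S_def OneSample hint_measure_def using Mdef[OF that] fm[OF that] f0[OF that] Gm[OF that]
      by (simp add: integral_density)
    then have "(\<Sum>j<K. S j r) = (\<Sum>j<K. LINT x|lborel. f j x * G j r x)" by simp
    also have "\<dots> \<le> (\<Sum>j<K. LINT x|lborel. gd x * G j r x)"
      by (intro sum_mono integral_mono intf intg) (auto intro!: mult_right_mono fg G0)
    also have "\<dots> = (LINT x|lborel. (\<Sum>j<K. gd x * G j r x))"
      by (rule Bochner_Integration.integral_sum[symmetric]) (use intg in auto)
    also have "\<dots> \<le> (LINT x|lborel. gd x * B)"
    proof (rule integral_mono)
      show "integrable lborel (\<lambda>x. \<Sum>j<K. gd x * G j r x)" using intg by auto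
      show "integrable lborel (\<lambda>x. gd x * B)" using gint by auto
      fix x
      have "0 \<le> gd x" by (rule gpos)
      show "(\<Sum>j<K. gd x * G j r x) \<le> gd x * B"
        unfolding sum_distrib_left[symmetric] using pt[of r x] \<open>0 \<le> gd x\<close>
        unfolding G_def by (rule mult_left_mono)
    qed
    also have "\<dots> = B * (LINT x|lborel. gd x)" by (simp add: mult.commute)
    also have "\<dots> \<le> B * Z" using gZ B0 by (rule mult_left_mono)
    finally show ?thesis by (simp add: mult.commute)
  qed
  interpret Rp: prob_space R by (rule R(1))
  have intS: "integrable R (S j)" if "j < K" for j
  proof (rule ccontr)
    assume "\<not> integrable R (S j)"
    then have "succ_prob (Ms j) h eps m R P Out = 0" unfolding succS by (rule not_integrable_integral_eq)
    then show False using succ[OF that] by simp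
  qed
  have "real K * (2/15) = (\<Sum>j<K. 2/15)" by simp
  also have "\<dots> \<le> (\<Sum>j<K. succ_prob (Ms j) h eps m R P Out)" by (intro sum_mono succ) simp
  also have "\<dots> = (LINT r|R. (\<Sum>j<K. S j r))" unfolding succS by (rule Bochner_Integration.integral_sum[symmetric]) (use intS in auto)
  also have "\<dots> \<le> (LINT r|R. Z * B)"
    by (rule integral_mono) (use intS ptS in auto)
  also have "\<dots> = Z * B" using Rp.prob_space by simp
  finally show ?thesis .
qed

lemma disj_sum:
  fixes lo hi g :: "nat \<Rightarrow> real"
  assumes sep: "\<And>j. Suc j < K \<Longrightarrow> hi j < lo (Suc j)"
    and lh: "\<And>j. j < K \<Longrightarrow> lo j \<le> hi j"
    and gj: "\<And>j. j < K \<Longrightarrow> g j = 0 \<or> (g j = 1 \<and> lo j \<le> p \<and> p \<le> hi j)"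
  shows "(\<Sum>j<K. g j) \<le> 1"
proof -
  have mono: "hi i < lo j" if "i < j" "j < K" for i j
    using that
  proof (induction j)
    case 0 then show ?case by simp
  next
    case (Suc j)
    show ?case
    proof (cases "i = j")
      case True then show ?thesis using sep Suc.prems by simp
    next
      case False
      then have "hi i < lo j" using Suc by simp
      also have "\<dots> \<le> hi j" using lh Suc.prems by simp
      also have "\<dots> < lo (Suc j)" using sep Suc.prems by simp
      finally show ?thesis .
    qed
  qed
  let ?A = "{j \<in> {..<K}. g j = 1}"
  have "(\<Sum>j<K. g j) = (\<Sum>j<K. if g j = 1 then 1 else 0)"
    by (rule sum.cong) (use gj in auto)
  also have "\<dots> = (\<Sum>j\<in>?A. 1)"
    using sum.inter_filter[of "{..<K}" "\<lambda>_. (1::real)" "\<lambda>j. g j = 1"] by simp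
  also have "\<dots> = real (card ?A)" by simp
  also have "card ?A \<le> Suc 0"
  proof (subst card_le_Suc0_iff_eq)
    show "finite ?A" by simp
    show "\<forall>a1\<in>?A. \<forall>a2\<in>?A. a1 = a2"
    proof (intro ballI)
      fix i j assume i: "i \<in> ?A" and j: "j \<in> ?A"
      have pi: "lo i \<le> p \<and> p \<le> hi i" using gj[of i] i by auto
      have pj: "lo j \<le> p \<and> p \<le> hi j" using gj[of j] j by auto
      show "i = j"
      proof (rule ccontr)
        assume "i \<noteq> j"
        then consider "i < j" | "j < i" by linarith
        then show False
        proof cases
          case 1 then show False using mono[of i j] j pi pj by auto
        next
          case 2 then show False using mono[of j i] i pi pj by auto
        qed
      qed
    qed
  qed
  finally show ?thesis by simp
qed

lemma (in fam) Q01: "0 \<le> Qf a d t e p \<and> Qf a d t e p \<le> 1"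
proof -
  interpret prob_space "Mf a d t e" by (rule prob)
  show ?thesis using sellq unfolding sellq_def by (metis measure_nonneg prob_le_1)
qed

lemma (in fam) path_pp: "path_prob (Mf a d t e) Pq bs = pp (Qf a d t e) Pq bs"
  unfolding path_prob_def pp_def sellq cdf ..

lemma (in fam) Rev_eq: "Rev (Mf a d t e) p = p * Qf a d t e p"
  unfolding Rev_def sellq ..

lemma (in fam) Rev_le: assumes "e \<le> 2" shows "Rev (Mf a d t e) p \<le> 2"
proof (cases "e \<le> p")
  case True then show ?thesis unfolding Rev_eq using Q_end by simp
next
  case False
  show ?thesis
  proof (cases "0 \<le> p")
    case True
    have "p * Qf a d t e p \<le> 2 * 1" using True False assms Q01[of p] by (intro mult_mono) auto
    then show ?thesis unfolding Rev_eq by simp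
  next
    case False
    then have "p * Qf a d t e p \<le> 0" using Q01[of p] by (simp add: mult_nonpos_nonneg)
    then show ?thesis unfolding Rev_eq by simp
  qed
qed

lemma (in fam) opt_ge: assumes "e \<le> 2" shows "Rev (Mf a d t e) x \<le> opt_rev (Mf a d t e)"
  unfolding opt_rev_def by (rule cSUP_upper) (auto intro: bdd_aboveI[where M=2] Rev_le[OF assms])

lemma (in fam) good_imp: assumes "e \<le> 2" "eps < 1" "(1 - eps) * opt_rev (Mf a d t e) \<le> Rev (Mf a d t e) p"
  shows "(1 - eps) * (t * Qf a d t e t) \<le> p * Qf a d t e p"
proof -
  have "(1 - eps) * Rev (Mf a d t e) t \<le> (1 - eps) * opt_rev (Mf a d t e)"
    using opt_ge[OF assms(1)] assms(2) by (intro mult_left_mono) auto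
  then show ?thesis using assms(3) unfolding Rev_eq by linarith
qed

definition tA :: "nat \<Rightarrow> real" where
  "tA j = [1, 1031/1000, 531/500, 1093/1000, 281/250, 289/250, 297/250, 61/50, 313/250, 257/200,
           659/500, 1351/1000, 277/200, 1419/1000, 727/500, 1489/1000] ! j"

lemma less16: "(j::nat) < 16 \<Longrightarrow> j \<in> {0,1,2,3,4,5,6,7,8,9,10,11,12,13,14,15}"
  by (simp add: less_Suc_eq numeral_eq_Suc)

lemma tA_range: "j < 16 \<Longrightarrow> 1 \<le> tA j \<and> tA j \<le> 1489/1000"
  by (drule less16) (auto simp: tA_def)

lemma tA_sep:
  assumes "Suc j < 16" "0 < eps" "eps < 1/64"
  shows "tA j + 12 * eps * tA j / (25 * tA j - 12) < (1 - eps) * tA (Suc j)"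
proof -
  have "j \<in> {0,1,2,3,4,5,6,7,8,9,10,11,12,13,14}" using assms(1) by (simp add: less_Suc_eq numeral_eq_Suc)
  then show ?thesis using assms(2,3) by (auto simp: tA_def)
qed

lemma pw_integrable: "integrable lborel (pw a d t e)"
proof -
  have "integrable lborel (\<lambda>x. a * indicator {1..<t} x + d * indicator {t..e} x :: real)"
    by (intro Bochner_Integration.integrable_add integrable_mult_right integrable_real_indicator)
       (auto simp: emeasure_lborel_Ico' emeasure_lborel_Icc')
  then show ?thesis unfolding pw_def[abs_def] .
qed

lemma pw_integral: assumes "1 \<le> t" "t \<le> e" shows "integral\<^sup>L lborel (pw a d t e) = a * (t - 1) + d * (e - t)"
proof -
  have "integral\<^sup>L lborel (pw a d t e) = (LINT x|lborel. a * indicator {1..<t} x + d * indicator {t..e} x)"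
    unfolding pw_def ..
  also have "\<dots> = a * measure lborel {1..<t} + d * measure lborel {t..e}"
    by (subst Bochner_Integration.integral_add)
       (auto intro!: integrable_real_indicator simp: emeasure_lborel_Ico' emeasure_lborel_Icc')
  also have "\<dots> = a * (t - 1) + d * (e - t)" using assms by simp
  finally show ?thesis .
qed

lemma pw_le: assumes "0 \<le> a" "a \<le> D" "0 \<le> d" "d \<le> D" "T \<le> t" "e \<le> E" "t \<le> E"
  shows "pw a d t e x \<le> pw a D T E x"
  using assms unfolding pw_def indicator_def by auto

lemma goodA:
  assumes F: "fam 0 (25/12) t (t + 12/25)" and t: "1 \<le> t" and e: "0 < eps" "eps < 1"
    and H: "(1 - eps) * (t * Qf 0 (25/12) t (t + 12/25) t) \<le> p * Qf 0 (25/12) t (t + 12/25) p"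
  shows "(1 - eps) * t \<le> p \<and> p \<le> t + 12 * eps * t / (25 * t - 12)"
proof -
  interpret fam 0 "25/12" t "t + 12/25" by fact
  have Qt: "Qf 0 (25/12) t (t + 12/25) t = 1" using Q_mid[of t] t by simp
  have H': "(1 - eps) * t \<le> p * Qf 0 (25/12) t (t + 12/25) p" using H Qt by simp
  have pos: "0 < 25 * t - 12" using t by simp
  have nn: "0 \<le> 12 * eps * t / (25 * t - 12)" using pos e t by simp
  consider "p \<le> 1" | "1 \<le> p" "p \<le> t" | "t \<le> p" "p \<le> t + 12/25" | "t + 12/25 \<le> p" by linarith
  then show ?thesis
  proof cases
    case 1
    then show ?thesis using H' Q_left[of p] t nn by simp
  next
    case 2
    then show ?thesis using H' Q_mid[of p] t nn by simp
  next
    case 3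
    define u where "u = p - t"
    have u0: "0 \<le> u" using 3 unfolding u_def by simp
    have "Qf 0 (25/12) t (t + 12/25) p = 25/12 * (t + 12/25 - p)" using Q_right[of p] 3 by simp
    moreover have "25/12 * (t + 12/25 - p) = 1 - 25/12 * u" unfolding u_def by (simp add: right_diff_distrib distrib_left)
    ultimately have Qp: "Qf 0 (25/12) t (t + 12/25) p = 1 - 25/12 * u" by simp
    have A: "(1 - eps) * t \<le> (t + u) * (1 - 25/12 * u)" using H' Qp unfolding u_def by simp
    have A12: "12 * ((1 - eps) * t) \<le> 12 * ((t + u) * (1 - 25/12 * u))" using A by simp
    have B: "12 * ((t + u) * (1 - 25/12 * u)) = 12 * t + 12 * u - 25 * (t * u) - 25 * (u * u)" by (simp add: algebra_simps)
    have C12: "12 * ((1 - eps) * t) = 12 * t - 12 * (eps * t)" by (simp add: algebra_simps)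
    have C: "(1 - eps) * t = t - eps * t" by (simp add: algebra_simps)
    have D: "0 \<le> u * u" by simp
    have "25 * (t * u) - 12 * u \<le> 12 * (eps * t)" using A12 B C12 D by linarith
    moreover have "u * (25 * t - 12) = 25 * (t * u) - 12 * u" by (simp add: algebra_simps)
    ultimately have "u * (25 * t - 12) \<le> 12 * eps * t" by simp
    then have "u \<le> 12 * eps * t / (25 * t - 12)" using pos by (simp add: field_simps)
    moreover have "(1 - eps) * t \<le> p"
    proof -
      have "0 \<le> eps * t" using e t by simp
      then show ?thesis using C 3 by linarith
    qed
    ultimately show ?thesis unfolding u_def by simp
  next
    case 4
    then have "Qf 0 (25/12) t (t + 12/25) p = 0" using Q_end by simp
    moreover have "0 < (1 - eps) * t" using e t by simp
    ultimately show ?thesis using H' by simp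
  qed
qed

lemma Gf0: "Gf M eps 0 Pq Oq = (if (1 - eps) * opt_rev M \<le> Rev M (Oq []) then 1 else 0)"
proof -
  have "{bs :: bool list. length bs = 0} = {[]}" by auto
  then show ?thesis unfolding Gf_def path_prob_def by simp
qed

definition MA :: "nat \<Rightarrow> real measure" where
  "MA j = Mf 0 (25/12) (tA j) (tA j + 12/25)"

lemma famA: "j < 16 \<Longrightarrow> fam 0 (25/12) (tA j) (tA j + 12/25)"
  using tA_range[of j] by unfold_locales auto

lemma regimeA:
  assumes eps: "0 < eps" "eps < 1/64"
    and R: "prob_space R" "sets R = sets borel"
    and Pm: "\<forall>bs. (\<lambda>(r, x). P r x bs) \<in> borel_measurable (borel \<Otimes>\<^sub>M borel)"
    and Om: "\<forall>bs. (\<lambda>(r, x). Out r x bs) \<in> borel_measurable (borel \<Otimes>\<^sub>M borel)"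
    and succ: "\<forall>M\<in>MA ` {..<16}. 2/15 \<le> succ_prob M h eps m R P Out"
  shows "m \<noteq> 0"
proof
  assume m0: "m = 0"
  define E where "E = (1489/1000 + 12/25 :: real)"
  have "real 16 * (2/15) \<le> (25/12 * (E - 1)) * 1"
  proof (rule integ_bound[where Ms=MA and f="\<lambda>j. pw 0 (25/12) (tA j) (tA j + 12/25)"
        and gd="pw 0 (25/12) 1 E" and R=R and P=P and Out=Out and eps=eps and m=m and h=h])
    fix j :: nat assume j: "j < 16"
    interpret fam 0 "25/12" "tA j" "tA j + 12/25" by (rule famA[OF j])
    show "MA j = density lborel (\<lambda>x. ennreal (pw 0 (25/12) (tA j) (tA j + 12/25) x))"
      unfolding MA_def Mf_def ..
    show "prob_space (MA j)" unfolding MA_def by (rule prob)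
    show "pw 0 (25/12) (tA j) (tA j + 12/25) \<in> borel_measurable borel" by simp
    show "0 \<le> pw 0 (25/12) (tA j) (tA j + 12/25) x" for x by (rule pw_nonneg) auto
    show "pw 0 (25/12) (tA j) (tA j + 12/25) x \<le> pw 0 (25/12) 1 E x" for x
      using tA_range[OF j] unfolding E_def by (intro pw_le) auto
    show "2/15 \<le> succ_prob (MA j) h eps m R P Out" using succ j by auto
  next
    show "integrable lborel (pw 0 (25/12) 1 E)" by (rule pw_integrable)
    show "0 \<le> pw 0 (25/12) 1 E x" for x by (rule pw_nonneg) auto
    show "integral\<^sup>L lborel (pw 0 (25/12) 1 E) \<le> 25/12 * (E - 1)"
      using pw_integral[of 1 E 0 "25/12"] unfolding E_def by simp
    show "1 \<le> 25/12 * (E - 1)" unfolding E_def by simp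
  next
    show "prob_space R" "sets R = sets borel" by fact+
    show "\<forall>bs. (\<lambda>(r, x). P r x bs) \<in> borel_measurable (borel \<Otimes>\<^sub>M borel)" by fact
    show "\<forall>bs. (\<lambda>(r, x). Out r x bs) \<in> borel_measurable (borel \<Otimes>\<^sub>M borel)" by fact
  next
    fix r x
    let ?p = "Out r x []"
    show "(\<Sum>j<16. Gf (MA j) eps m (P r x) (Out r x)) \<le> 1"
      unfolding m0 Gf0
    proof (rule disj_sum[where lo="\<lambda>j. (1 - eps) * tA j" and hi="\<lambda>j. tA j + 12 * eps * tA j / (25 * tA j - 12)" and p="?p"])
      fix j :: nat assume j: "Suc j < 16"
      show "tA j + 12 * eps * tA j / (25 * tA j - 12) < (1 - eps) * tA (Suc j)"
        using tA_sep[OF j eps] .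
    next
      fix j :: nat assume j: "j < 16"
      have t: "1 \<le> tA j" using tA_range[OF j] by simp
      have "(1 - eps) * tA j \<le> tA j" using eps t by (simp add: algebra_simps)
      also have "\<dots> \<le> tA j + 12 * eps * tA j / (25 * tA j - 12)" using eps t by simp
      finally show "(1 - eps) * tA j \<le> tA j + 12 * eps * tA j / (25 * tA j - 12)" .
    next
      fix j :: nat assume j: "j < 16"
      interpret fam 0 "25/12" "tA j" "tA j + 12/25" by (rule famA[OF j])
      have e2: "tA j + 12/25 \<le> 2" using tA_range[OF j] by simp
      show "(if (1 - eps) * opt_rev (MA j) \<le> Rev (MA j) ?p then 1 else 0) = (0::real) \<or>
         ((if (1 - eps) * opt_rev (MA j) \<le> Rev (MA j) ?p then 1 else 0) = (1::real) \<and>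
          (1 - eps) * tA j \<le> ?p \<and> ?p \<le> tA j + 12 * eps * tA j / (25 * tA j - 12))"
      proof (cases "(1 - eps) * opt_rev (MA j) \<le> Rev (MA j) ?p")
        case True
        have "(1 - eps) * (tA j * Qf 0 (25/12) (tA j) (tA j + 12/25) (tA j)) \<le> ?p * Qf 0 (25/12) (tA j) (tA j + 12/25) ?p"
          using good_imp[OF e2, of eps ?p] True eps unfolding MA_def by simp
        then have "(1 - eps) * tA j \<le> ?p \<and> ?p \<le> tA j + 12 * eps * tA j / (25 * tA j - 12)"
          using goodA[OF famA[OF j]] tA_range[OF j] eps by simp
        then show ?thesis using True by simp
      qed simp
    qed
  qed
  then show False unfolding E_def by simp
qed

lemma lin_aux: fixes X Y Z e :: real shows "(1 - e) * X \<le> Y \<Longrightarrow> Z = X - Y \<Longrightarrow> Z \<le> e * X"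
  by (simp add: algebra_simps)

lemma sub_nonneg_aux: fixes A B Z :: real shows "A - B = Z \<Longrightarrow> 0 \<le> Z \<Longrightarrow> B \<le> A"
  by simp

definition dB :: "real \<Rightarrow> real" where "dB t = (5 - t) / (4 * (2 - t))"

lemma famB: assumes "3/2 \<le> t" "t < 2" shows "fam (1/4) (dB t) t 2"
proof
  show "0 \<le> (1/4::real)" by simp
  show "1/4 \<le> dB t" unfolding dB_def using assms by (simp add: field_simps)
  show "1 \<le> t" "t < 2" using assms by auto
  have "dB t * (2 - t) = (5 - t) / 4" unfolding dB_def using assms by (simp add: field_simps)
  then show "1/4 * (t - 1) + dB t * (2 - t) = 1" by (simp add: field_simps)
qed

lemma dB_mono: assumes "s \<le> t" "t < 2" shows "dB s \<le> dB t"
proof -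
  have "(5 - s) * (4 * (2 - t)) \<le> (5 - t) * (4 * (2 - s))" using assms by (simp add: algebra_simps)
  then show ?thesis unfolding dB_def using assms by (simp add: divide_simps)
qed

lemma goodB:
  assumes t: "3/2 \<le> t" "t \<le> 152/100" and e: "0 < eps" "eps < 1/2000"
    and H: "(1 - eps) * (t * Qf (1/4) (dB t) t 2 t) \<le> p * Qf (1/4) (dB t) t 2 p"
  shows "t - 14/5 * eps \<le> p \<and> p \<le> t + eps"
proof -
  interpret fam "1/4" "dB t" t 2 using famB t by simp
  have Qt0: "Qf (1/4) (dB t) t 2 t = 1 - 1/4 * (t - 1)" using Q_mid[of t] t by simp
  have "1 - 1/4 * (t - 1) = (5 - t) / (4::real)" by (simp add: field_simps)
  then have Qt: "Qf (1/4) (dB t) t 2 t = (5 - t) / 4" using Qt0 by simp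
  have Qt2: "Qf (1/4) (dB t) t 2 t = dB t * (2 - t)" using Q_right[of t] t by simp
  have tgt_pos: "0 < (1 - eps) * (t * ((5 - t) / 4))" using t e by simp
  have big: "1 < (1 - eps) * (t * ((5 - t) / 4))"
  proof -
    have "t * (5 - t) - 21/4 = (t - 3/2) * (7/2 - t)" by (simp add: algebra_simps)
    moreover have "0 \<le> (t - 3/2) * (7/2 - t)" using t by simp
    ultimately have "21/4 \<le> t * (5 - t)" by (rule sub_nonneg_aux)
    then have "21/16 \<le> t * ((5 - t) / 4)" by simp
    moreover have "0 < 1 - eps" "1 - eps > 4/5" using e by auto
    ultimately have "(4/5) * (21/16) \<le> (1 - eps) * (t * ((5 - t) / 4))"
      by (intro mult_mono) auto
    then show ?thesis by simp
  qed
  consider "p \<le> 1" | "1 \<le> p" "p \<le> t" | "t \<le> p" "p \<le> 2" | "2 \<le> p" using t by linarith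
  then show ?thesis
  proof cases
    case 1
    then have "p * Qf (1/4) (dB t) t 2 p \<le> 1"
      using Q_left[of p] by simp
    then show ?thesis using H Qt big by simp
  next
    case 2
    have Qp0: "Qf (1/4) (dB t) t 2 p = 1 - 1/4 * (p - 1)" using Q_mid[of p] 2 by simp
    have "1 - 1/4 * (p - 1) = (5 - p) / (4::real)" by (simp add: field_simps)
    then have Qp: "Qf (1/4) (dB t) t 2 p = (5 - p) / 4" using Qp0 by simp
    have A: "(1 - eps) * (t * (5 - t)) \<le> p * (5 - p)" using H Qt Qp by simp
    have key: "(t - p) * (5 - t - p) \<le> eps * (t * (5 - t))"
      by (rule lin_aux[OF A]) (simp add: algebra_simps)
    have lower: "t - 14/5 * eps \<le> p"
    proof (rule ccontr)
      assume "\<not> t - 14/5 * eps \<le> p"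
      then have tp: "14/5 * eps < t - p" by simp
      have f1: "5 - 2 * t \<le> 5 - t - p" using 2 by simp
      have f2: "0 < 5 - 2 * t" using t by simp
      have "14/5 * eps * (5 - 2 * t) \<le> 14/5 * eps * (5 - t - p)" using f1 e by (simp add: mult_left_mono)
      also have "\<dots> < (t - p) * (5 - t - p)" using tp f1 f2 by (simp add: mult_strict_right_mono)
      also have "\<dots> \<le> eps * (t * (5 - t))" by (rule key)
      finally have "14/5 * eps * (5 - 2 * t) < eps * (t * (5 - t))" .
      then have "14/5 * (5 - 2 * t) < t * (5 - t)" using e by (simp add: mult.assoc)
      moreover have "t * (5 - t) \<le> 14/5 * (5 - 2 * t)"
      proof -
        have "14/5 * (5 - 2 * t) - t * (5 - t) = t * t - 53/5 * t + 14" by (simp add: field_simps)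
        moreover have "0 \<le> t * t - 53/5 * t + 14"
        proof -
          have "t * t - 53/5 * t + 14 = (152/100 - t) * (53/5 - 152/100 - t) + (14 - 152/100 * (53/5 - 152/100))"
            by (simp add: field_simps)
          moreover have "0 \<le> (152/100 - t) * (53/5 - 152/100 - t)" using t by simp
          ultimately show ?thesis by simp
        qed
        ultimately show ?thesis by (rule sub_nonneg_aux)
      qed
      ultimately show False by simp
    qed
    then show ?thesis using 2 e by simp
  next
    case 3
    have d0: "0 < dB t" unfolding dB_def using t by simp
    have Qp: "Qf (1/4) (dB t) t 2 p = dB t * (2 - p)" using Q_right[of p] 3 by simp
    have "(1 - eps) * (t * (dB t * (2 - t))) \<le> p * (dB t * (2 - p))" using H Qt2 Qp by simp
    then have "dB t * ((1 - eps) * (t * (2 - t))) \<le> dB t * (p * (2 - p))" by (simp add: algebra_simps)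
    then have A: "(1 - eps) * (t * (2 - t)) \<le> p * (2 - p)" using d0 by simp
    have key: "(p - t) * (p + t - 2) \<le> eps * (t * (2 - t))"
      by (rule lin_aux[OF A]) (simp add: algebra_simps)
    have "p - t \<le> (p - t) * (p + t - 2)" using 3 t by (simp add: mult_le_cancel_left1)
    also have "\<dots> \<le> eps * (t * (2 - t))" by (rule key)
    also have "\<dots> \<le> eps * 1"
    proof -
      have "1 - t * (2 - t) = (t - 1) * (t - 1)" by (simp add: algebra_simps)
      moreover have "0 \<le> (t - 1) * (t - 1)" by simp
      ultimately have "t * (2 - t) \<le> 1" by (rule sub_nonneg_aux)
      then show ?thesis using e by (simp add: mult_left_mono)
    qed
    finally show ?thesis using 3 e by simp
  next
    case 4
    then have "Qf (1/4) (dB t) t 2 p = 0" using Q_end by simp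
    then show ?thesis using H Qt tgt_pos by simp
  qed
qed

lemma sq_div_self: "(x::real)\<^sup>2 / x = x"
  by (cases "x = 0") (simp_all add: power2_eq_square)

lemma chi_eq_case: "(a::real) = b \<Longrightarrow> a\<^sup>2 / b + (1 - a)\<^sup>2 / (1 - b) = 1"
  by (simp add: sq_div_self)

lemma chi_ident: assumes "0 < b" "b < (1::real)"
  shows "a\<^sup>2 / b + (1 - a)\<^sup>2 / (1 - b) = 1 + (a - b)\<^sup>2 / (b * (1 - b))"
  using assms by (simp add: field_simps power2_eq_square)

lemma dB32: "dB (3/2) = 7/4" unfolding dB_def by simp

lemma chiB:
  assumes t: "3/2 \<le> t" "t \<le> 3/2 + 36 * eps" and e: "0 < eps" "eps < 1/2000"
  defines "a \<equiv> Qf (1/4) (dB t) t 2" and "b \<equiv> Qf (1/4) (7/4) (3/2) 2"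
  shows "(b p = 0 \<longrightarrow> a p = 0) \<and> (b p = 1 \<longrightarrow> a p = 1) \<and>
         (a p)\<^sup>2 / b p + (1 - a p)\<^sup>2 / (1 - b p) \<le> 1 + 34000 * eps\<^sup>2"
proof -
  have t2: "t < 2" using t e by simp
  interpret A: fam "1/4" "dB t" t 2 using famB[OF t(1) t2] .
  interpret B: fam "1/4" "7/4" "3/2" 2 using famB[of "3/2"] unfolding dB32 by simp
  have c0: "0 \<le> 34000 * eps\<^sup>2" by simp
  consider "p \<le> 1" | "1 \<le> p" "p \<le> 3/2" | "3/2 \<le> p" "p < 2" | "2 \<le> p" by linarith
  then show ?thesis
  proof cases
    case 1
    then have "a p = 1" "b p = 1" unfolding a_def b_def using A.Q_left B.Q_left by auto
    then show ?thesis using chi_eq_case[of "a p" "b p"] c0 by simp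
  next
    case 2
    then have ab: "a p = b p" unfolding a_def b_def using A.Q_mid[of p] B.Q_mid[of p] t by simp
    have b0: "b p \<noteq> 0" unfolding b_def using B.Q_mid[of p] 2 by simp
    have a1: "b p = 1 \<longrightarrow> a p = 1" using ab by simp
    show ?thesis using chi_eq_case[OF ab] c0 ab b0 by simp
  next
    case 3
    have bv: "b p = 7/4 * (2 - p)" unfolding b_def using B.Q_right[of p] 3 by simp
    have bpos: "0 < b p" using bv 3 by simp
    have blt: "b p \<le> 7/8" using bv 3 by simp
    have b1: "1/8 \<le> 1 - b p" using blt by simp
    have diff: "0 \<le> a p - b p \<and> a p - b p \<le> 120 * eps * (2 - p)"
    proof (cases "p \<le> t")
      case True
      have av: "a p = 1 - 1/4 * (p - 1)" unfolding a_def using A.Q_mid[of p] True 3 by simp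
      have ev: "a p - b p = 3/2 * (p - 3/2)" using av bv by (simp add: field_simps)
      have "3/2 * (p - 3/2) \<le> 3/2 * (36 * eps)" using True t by simp
      also have "\<dots> \<le> 120 * eps * (2 - p)"
      proof -
        have "2 - p \<ge> 2 - 3/2 - 36 * eps" using True t by simp
        moreover have "2 - 3/2 - 36 * eps \<ge> 9/20" using e by simp
        ultimately have "120 * eps * (9/20) \<le> 120 * eps * (2 - p)" using e by (intro mult_left_mono) auto
        then show ?thesis by simp
      qed
      finally show ?thesis using ev 3 by simp
    next
      case False
      have av: "a p = dB t * (2 - p)" unfolding a_def using A.Q_right[of p] False 3 by simp
      have dd: "dB t - 7/4 = 3/2 * (t - 3/2) / (2 - t)" unfolding dB_def using t2 by (simp add: field_simps)
      have d0: "0 \<le> dB t - 7/4" using dd t t2 by simp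
      have "dB t - 7/4 \<le> 120 * eps"
      proof -
        have "2 - t \<ge> 9/20" using t e by simp
        have "3/2 * (t - 3/2) \<le> 120 * eps * (9/20)" using t by simp
        also have "\<dots> \<le> 120 * eps * (2 - t)" using \<open>2 - t \<ge> 9/20\<close> e by (intro mult_left_mono) auto
        finally have X: "3/2 * (t - 3/2) \<le> 120 * eps * (2 - t)" .
        have "3/2 * (t - 3/2) / (2 - t) \<le> 120 * eps"
          using X t2 by (subst pos_divide_le_eq) auto
        then show ?thesis unfolding dd .
      qed
      moreover have "a p - b p = (dB t - 7/4) * (2 - p)"
      proof -
        have "a p - b p = dB t * (2 - p) - 7/4 * (2 - p)" using av bv by simp
        also have "\<dots> = (dB t - 7/4) * (2 - p)" by (simp add: left_diff_distrib)
        finally show ?thesis .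
      qed
      ultimately show ?thesis using d0 3 by (simp add: mult_right_mono)
    qed
    have sq: "(a p - b p)\<^sup>2 \<le> (120 * eps * (2 - p))\<^sup>2"
      using diff by (intro power_mono) auto
    have "(a p - b p)\<^sup>2 \<le> 34000 * eps\<^sup>2 * (b p * (1 - b p))"
    proof -
      have "(120 * eps * (2 - p))\<^sup>2 = 14400 * eps\<^sup>2 * (2 - p) * (2 - p)" by (simp add: power2_eq_square)
      also have "\<dots> \<le> 14400 * eps\<^sup>2 * (2 - p) * (1/2)" using 3 by (intro mult_left_mono) auto
      also have "\<dots> \<le> 34000 * eps\<^sup>2 * (7/4 * (2 - p) * (1/8))"
      proof -
        have X0: "0 \<le> (2 - p) * eps\<^sup>2" using 3 by simp
        have "14400 * eps\<^sup>2 * (2 - p) * (1/2) = 7200 * ((2 - p) * eps\<^sup>2)" by simp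
        also have "7200 * ((2 - p) * eps\<^sup>2) \<le> 29750/4 * ((2 - p) * eps\<^sup>2)"
          by (rule mult_right_mono[OF _ X0]) simp
        also have "29750/4 * ((2 - p) * eps\<^sup>2) = 34000 * eps\<^sup>2 * (7/4 * (2 - p) * (1/8))" by simp
        finally show ?thesis .
      qed
      also have "\<dots> \<le> 34000 * eps\<^sup>2 * (b p * (1 - b p))"
        using bv b1 bpos 3 by (intro mult_left_mono mult_mono) auto
      finally show ?thesis using sq by simp
    qed
    then have "(a p - b p)\<^sup>2 / (b p * (1 - b p)) \<le> 34000 * eps\<^sup>2"
      using bpos b1 by (simp add: divide_le_eq)
    then show ?thesis using chi_ident[OF bpos, of "a p"] blt bpos by simp
  next
    case 4
    then have "a p = 0" "b p = 0" unfolding a_def b_def using A.Q_end B.Q_end by auto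
    then show ?thesis using chi_eq_case[of "a p" "b p"] c0 by simp
  qed
qed

definition tB :: "real \<Rightarrow> nat \<Rightarrow> real" where "tB eps j = 3/2 + 4 * real j * eps"

definition MB :: "real \<Rightarrow> nat \<Rightarrow> real measure" where
  "MB eps j = Mf (1/4) (dB (tB eps j)) (tB eps j) 2"

lemma tB_range: assumes "j < 10" "0 < eps" shows "3/2 \<le> tB eps j \<and> tB eps j \<le> 3/2 + 36 * eps"
proof -
  have "real j \<le> 9" using assms by simp
  then have "4 * real j * eps \<le> 36 * eps" using assms by (simp add: mult_right_mono)
  then show ?thesis unfolding tB_def using assms by simp
qed

lemma famB': assumes "j < 10" "0 < eps" "eps < 1/2000" shows "fam (1/4) (dB (tB eps j)) (tB eps j) 2"
  using tB_range[OF assms(1,2)] assms by (intro famB) auto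

lemma exp_small: assumes "0 \<le> x" "real m * x \<le> 1/2" shows "(1 + x) ^ m \<le> 1 + 2 * (real m * x)"
proof -
  have "(1 + x) ^ m \<le> exp x ^ m" using assms by (intro power_mono) (auto simp: exp_ge_add_one_self)
  also have "\<dots> = exp (real m * x)" by (simp add: exp_of_nat_mult)
  also have "\<dots> \<le> 1 + 2 * (real m * x)" using real_exp_bound_lemma[of "real m * x"] assms by simp
  finally show ?thesis .
qed

lemma regimeB:
  assumes eps: "0 < eps" "eps < 1/2000"
    and R: "prob_space R" "sets R = sets borel"
    and Pm: "\<forall>bs. (\<lambda>(r, x). P r x bs) \<in> borel_measurable (borel \<Otimes>\<^sub>M borel)"
    and Om: "\<forall>bs. (\<lambda>(r, x). Out r x bs) \<in> borel_measurable (borel \<Otimes>\<^sub>M borel)"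
    and succ: "\<forall>M\<in>MB eps ` {..<10}. 2/15 \<le> succ_prob M h eps m R P Out"
  shows "1 / (2 * 10^8) \<le> real m * eps\<^sup>2"
proof (rule ccontr)
  assume "\<not> 1 / (2 * 10^8) \<le> real m * eps\<^sup>2"
  then have mlt: "real m * eps\<^sup>2 < 1 / (2 * 10^8)" by simp
  define chi where "chi = 34000 * eps\<^sup>2"
  define l where "l = (1/50 :: real)"
  define B where "B = 1 + 10 * (((1 + chi) ^ m - 1) / (2 * l) + l / 2)"
  define tm where "tm = tB eps 9"
  define Z where "Z = 1/4 * (3/2 - 1) + dB tm * (2 - 3/2)"
  have chi0: "0 \<le> chi" unfolding chi_def by simp
  have mchi: "real m * chi \<le> 17/100000"
  proof -
    have "real m * chi = 34000 * (real m * eps\<^sup>2)" unfolding chi_def by simp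
    also have "\<dots> \<le> 34000 * (1 / (2 * 10^8))" using mlt by simp
    finally show ?thesis by simp
  qed
  have pw_bound: "(1 + chi) ^ m \<le> 1 + 34/100000"
    using exp_small[OF chi0, of m] mchi by simp
  have B12: "B \<le> 12/10"
  proof -
    have "((1 + chi) ^ m - 1) / (2 * l) \<le> (34/100000) / (2 * l)"
      using pw_bound unfolding l_def by (intro divide_right_mono) auto
    then show ?thesis unfolding B_def l_def by simp
  qed
  have tm_range: "3/2 \<le> tm \<and> tm \<le> 3/2 + 36 * eps" unfolding tm_def using tB_range[of 9 eps] eps by simp
  have dtm_lo: "7/4 \<le> dB tm" using dB_mono[of "3/2" tm] tm_range eps dB32 by simp
  have dtm_hi: "dB tm \<le> 181/100"
  proof -
    have "dB tm \<le> dB (1518/1000)" using dB_mono[of tm "1518/1000"] tm_range eps by simp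
    also have "\<dots> \<le> 181/100" unfolding dB_def by simp
    finally show ?thesis .
  qed
  have Z1: "1 \<le> Z" unfolding Z_def using dtm_lo by simp
  have Zhi: "Z \<le> 103/100" unfolding Z_def using dtm_hi by simp
  have "real 10 * (2/15) \<le> Z * B"
  proof (rule integ_bound[where Ms="MB eps" and f="\<lambda>j. pw (1/4) (dB (tB eps j)) (tB eps j) 2"
        and gd="pw (1/4) (dB tm) (3/2) 2" and R=R and P=P and Out=Out and eps=eps and m=m and h=h])
    fix j :: nat assume j: "j < 10"
    interpret fam "1/4" "dB (tB eps j)" "tB eps j" 2 by (rule famB'[OF j eps])
    show "MB eps j = density lborel (\<lambda>x. ennreal (pw (1/4) (dB (tB eps j)) (tB eps j) 2 x))"
      unfolding MB_def Mf_def ..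
    show "prob_space (MB eps j)" unfolding MB_def by (rule prob)
    show "pw (1/4) (dB (tB eps j)) (tB eps j) 2 \<in> borel_measurable borel" by simp
    show "0 \<le> pw (1/4) (dB (tB eps j)) (tB eps j) 2 x" for x by (rule pw_nonneg) (use d0 in auto)
    have tj: "3/2 \<le> tB eps j \<and> tB eps j \<le> 3/2 + 36 * eps" by (rule tB_range[OF j eps(1)])
    have "tB eps j \<le> tm"
    proof -
      have "real j \<le> 9" using j by simp
      then have "4 * real j * eps \<le> 4 * 9 * eps" using eps by (intro mult_right_mono) auto
      then show ?thesis unfolding tm_def tB_def by simp
    qed
    then have "dB (tB eps j) \<le> dB tm" using dB_mono tm_range eps by simp
    then show "pw (1/4) (dB (tB eps j)) (tB eps j) 2 x \<le> pw (1/4) (dB tm) (3/2) 2 x" for x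
      using tj ad dtm_lo eps by (intro pw_le) auto
    show "2/15 \<le> succ_prob (MB eps j) h eps m R P Out" using succ j by auto
  next
    show "integrable lborel (pw (1/4) (dB tm) (3/2) 2)" by (rule pw_integrable)
    show "0 \<le> pw (1/4) (dB tm) (3/2) 2 x" for x by (rule pw_nonneg) (use dtm_lo in auto)
    show "integral\<^sup>L lborel (pw (1/4) (dB tm) (3/2) 2) \<le> Z"
      using pw_integral[of "3/2" 2 "1/4" "dB tm"] unfolding Z_def by simp
    show "1 \<le> Z" by (rule Z1)
  next
    show "prob_space R" "sets R = sets borel" by fact+
    show "\<forall>bs. (\<lambda>(r, x). P r x bs) \<in> borel_measurable (borel \<Otimes>\<^sub>M borel)" by fact
    show "\<forall>bs. (\<lambda>(r, x). Out r x bs) \<in> borel_measurable (borel \<Otimes>\<^sub>M borel)" by fact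
  next
    fix r x
    define a where "a j = Qf (1/4) (dB (tB eps j)) (tB eps j) 2" for j
    define b where "b = Qf (1/4) (7/4) (3/2) 2"
    define g where "g j bs = (if (1 - eps) * opt_rev (MB eps j) \<le> Rev (MB eps j) (Out r x bs) then 1 else 0 :: real)" for j bs
    interpret BB: fam "1/4" "7/4" "3/2" 2 using famB[of "3/2"] unfolding dB32 by simp
    have Geq: "Gf (MB eps j) eps m (P r x) (Out r x) = (\<Sum>bs\<in>{bs. length bs = m}. pp (a j) (P r x) bs * g j bs)"
      if j: "j < 10" for j
    proof -
      interpret fam "1/4" "dB (tB eps j)" "tB eps j" 2 by (rule famB'[OF j eps])
      show ?thesis unfolding Gf_def g_def a_def MB_def path_pp ..
    qed
    have "(\<Sum>j<10. Gf (MB eps j) eps m (P r x) (Out r x)) = (\<Sum>j<10. \<Sum>bs\<in>{bs. length bs = m}. pp (a j) (P r x) bs * g j bs)"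
      by (rule sum.cong) (auto simp: Geq)
    also have "\<dots> \<le> 1 + real 10 * (((1 + chi) ^ m - 1) / (2 * l) + l / 2)"
    proof (rule tree_bound)
      fix j :: nat and p :: real assume j: "j < 10"
      interpret fam "1/4" "dB (tB eps j)" "tB eps j" 2 by (rule famB'[OF j eps])
      have tj: "3/2 \<le> tB eps j \<and> tB eps j \<le> 3/2 + 36 * eps" by (rule tB_range[OF j eps(1)])
      have C: "(b p = 0 \<longrightarrow> a j p = 0) \<and> (b p = 1 \<longrightarrow> a j p = 1) \<and>
         (a j p)\<^sup>2 / b p + (1 - a j p)\<^sup>2 / (1 - b p) \<le> 1 + 34000 * eps\<^sup>2"
        unfolding a_def b_def using chiB[of "tB eps j" eps p] tj eps by simp
      show "0 \<le> a j p \<and> a j p \<le> 1" unfolding a_def by (rule Q01)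
      show "b p = 0 \<longrightarrow> a j p = 0" "b p = 1 \<longrightarrow> a j p = 1" using C by auto
      show "(a j p)\<^sup>2 / b p + (1 - a j p)\<^sup>2 / (1 - b p) \<le> 1 + chi" using C unfolding chi_def by auto
    next
      show "0 \<le> b p \<and> b p \<le> 1" for p unfolding b_def by (rule BB.Q01)
      show "0 \<le> chi" by (rule chi0)
      show "0 \<le> g j bs \<and> g j bs \<le> 1" for j bs unfolding g_def by simp
      show "0 < l" unfolding l_def by simp
    next
      fix bs
      let ?p = "Out r x bs"
      show "(\<Sum>j<10. g j bs) \<le> 1"
      proof (rule disj_sum[where lo="\<lambda>j. tB eps j - 14/5 * eps" and hi="\<lambda>j. tB eps j + eps" and p="?p"])
        fix j :: nat assume "Suc j < 10"
        show "tB eps j + eps < tB eps (Suc j) - 14/5 * eps" unfolding tB_def using eps by (simp add: algebra_simps)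
      next
        fix j :: nat assume "j < 10"
        show "tB eps j - 14/5 * eps \<le> tB eps j + eps" using eps by simp
      next
        fix j :: nat assume j: "j < 10"
        interpret fam "1/4" "dB (tB eps j)" "tB eps j" 2 by (rule famB'[OF j eps])
        have tj: "3/2 \<le> tB eps j \<and> tB eps j \<le> 3/2 + 36 * eps" by (rule tB_range[OF j eps(1)])
        show "g j bs = 0 \<or> (g j bs = 1 \<and> tB eps j - 14/5 * eps \<le> ?p \<and> ?p \<le> tB eps j + eps)"
        proof (cases "(1 - eps) * opt_rev (MB eps j) \<le> Rev (MB eps j) ?p")
          case True
          have "(1 - eps) * (tB eps j * Qf (1/4) (dB (tB eps j)) (tB eps j) 2 (tB eps j))
               \<le> ?p * Qf (1/4) (dB (tB eps j)) (tB eps j) 2 ?p"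
            using good_imp[of eps ?p] True eps unfolding MB_def by simp
          then have "tB eps j - 14/5 * eps \<le> ?p \<and> ?p \<le> tB eps j + eps"
            using goodB[of "tB eps j" eps ?p] tj eps by simp
          then show ?thesis using True unfolding g_def by simp
        qed (simp add: g_def)
      qed
    qed
    also have "\<dots> = B" unfolding B_def by simp
    finally show "(\<Sum>j<10. Gf (MB eps j) eps m (P r x) (Out r x)) \<le> B" .
  qed
  also have "Z * B \<le> 103/100 * (12/10)"
  proof -
    have "1 \<le> (1 + chi) ^ m" using chi0 by (simp add: one_le_power)
    then have "0 \<le> B" unfolding B_def l_def by simp
    then show ?thesis using Zhi B12 Z1 by (intro mult_mono) auto
  qed
  finally show False by simp
qed

theorem theorem5p3:
  shows "\<exists>c>0. \<forall>eps. 0 < eps \<and> eps < 1/64 \<longrightarrow>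
    (\<exists>Fam :: real measure set. Fam \<noteq> {} \<and>
      (\<forall>M\<in>Fam. prob_space M \<and> sets M = sets borel \<and> MHR M \<and> measure M {1..2} = 1) \<and>
      (\<forall>h m (R :: real measure) P Out.
         prob_space R \<and> sets R = sets borel \<and>
         (\<forall>bs. (\<lambda>(r, x). P r x bs) \<in> borel_measurable (borel \<Otimes>\<^sub>M borel)) \<and>
         (\<forall>bs. (\<lambda>(r, x). Out r x bs) \<in> borel_measurable (borel \<Otimes>\<^sub>M borel)) \<and>
         (\<forall>M\<in>Fam. succ_prob M h eps m R P Out \<ge> 2/15)
         \<longrightarrow> real m \<ge> c / eps\<^sup>2))"
proof (intro exI[of _ "1 / (2 * 10^8)"] conjI allI impI)
  show "0 < (1 / (2 * 10^8) :: real)" by simp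
  fix eps :: real assume eps: "0 < eps \<and> eps < 1/64"
  show "\<exists>Fam :: real measure set. Fam \<noteq> {} \<and>
      (\<forall>M\<in>Fam. prob_space M \<and> sets M = sets borel \<and> MHR M \<and> measure M {1..2} = 1) \<and>
      (\<forall>h m (R :: real measure) P Out.
         prob_space R \<and> sets R = sets borel \<and>
         (\<forall>bs. (\<lambda>(r, x). P r x bs) \<in> borel_measurable (borel \<Otimes>\<^sub>M borel)) \<and>
         (\<forall>bs. (\<lambda>(r, x). Out r x bs) \<in> borel_measurable (borel \<Otimes>\<^sub>M borel)) \<and>
         (\<forall>M\<in>Fam. succ_prob M h eps m R P Out \<ge> 2/15)
         \<longrightarrow> real m \<ge> (1 / (2 * 10^8)) / eps\<^sup>2)"
  proof (cases "eps < 1/2000")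
    case True
    show ?thesis
    proof (intro exI[of _ "MB eps ` {..<10}"] conjI ballI allI impI)
      have "MB eps 0 \<in> MB eps ` {..<10}" by simp
      then show "MB eps ` {..<10} \<noteq> {}" by blast
    next
      fix M assume "M \<in> MB eps ` {..<10}"
      then obtain j where j: "j < 10" and M: "M = MB eps j" by auto
      interpret fam "1/4" "dB (tB eps j)" "tB eps j" 2 using famB'[OF j] eps True by simp
      show "prob_space M" unfolding M MB_def by (rule prob)
      show "sets M = sets borel" unfolding M MB_def by simp
      show "MHR M" unfolding M MB_def by (rule mhr)
      show "measure M {1..2} = 1" unfolding M MB_def by (rule supp) simp
    next
      fix h m R P Out
      assume H: "prob_space R \<and> sets R = sets borel \<and>
         (\<forall>bs. (\<lambda>(r, x). P r x bs) \<in> borel_measurable (borel \<Otimes>\<^sub>M borel)) \<and>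
         (\<forall>bs. (\<lambda>(r, x). Out r x bs) \<in> borel_measurable (borel \<Otimes>\<^sub>M borel)) \<and>
         (\<forall>M\<in>MB eps ` {..<10}. succ_prob M h eps m R P Out \<ge> 2/15)"
      have "1 / (2 * 10^8) \<le> real m * eps\<^sup>2"
        using regimeB[of eps R P Out h m] H eps True by auto
      then show "real m \<ge> (1 / (2 * 10^8)) / eps\<^sup>2" using eps by (simp add: divide_le_eq)
    qed
  next
    case False
    show ?thesis
    proof (intro exI[of _ "MA ` {..<16}"] conjI ballI allI impI)
      have "MA 0 \<in> MA ` {..<16}" by simp
      then show "MA ` {..<16} \<noteq> {}" by blast
    next
      fix M assume "M \<in> MA ` {..<16}"
      then obtain j where j: "j < 16" and M: "M = MA j" by auto
      interpret fam 0 "25/12" "tA j" "tA j + 12/25" by (rule famA[OF j])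
      show "prob_space M" unfolding M MA_def by (rule prob)
      show "sets M = sets borel" unfolding M MA_def by simp
      show "MHR M" unfolding M MA_def by (rule mhr)
      show "measure M {1..2} = 1" unfolding M MA_def by (rule supp) (use tA_range[OF j] in simp)
    next
      fix h m R P Out
      assume H: "prob_space R \<and> sets R = sets borel \<and>
         (\<forall>bs. (\<lambda>(r, x). P r x bs) \<in> borel_measurable (borel \<Otimes>\<^sub>M borel)) \<and>
         (\<forall>bs. (\<lambda>(r, x). Out r x bs) \<in> borel_measurable (borel \<Otimes>\<^sub>M borel)) \<and>
         (\<forall>M\<in>MA ` {..<16}. succ_prob M h eps m R P Out \<ge> 2/15)"
      have "m \<noteq> 0" using regimeA[of eps R P Out h m] H eps by auto
      then have m1: "1 \<le> real m" by simp
      have e2: "1/2000 \<le> eps" using False by simp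
      have "(1/2000)\<^sup>2 \<le> eps\<^sup>2" using e2 by (intro power_mono) auto
      then have "(1 / (2 * 10^8)) / eps\<^sup>2 \<le> (1 / (2 * 10^8)) / (1/2000)\<^sup>2"
        using eps by (intro divide_left_mono) auto
      also have "\<dots> \<le> 1" by (simp add: power2_eq_square)
      finally show "real m \<ge> (1 / (2 * 10^8)) / eps\<^sup>2" using m1 by simp
    qed
  qed
qed

end
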